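(* Consider the switched discrete-time system $$x[k+1]=Ax[k]+\sigma[k]Bu[k]+(1-\sigma[k])d[k]+w[k],\qquad y[k]=x[k]+v[k],$$ with $x[k]\in\mathbb{R}^n$, $u[k]\in\mathbb{R}^m$, $d[k]\in\mathcal{D}$, $w[k]\in\mathcal{W}$, $v[k]\in\mathcal{V}$ arbitrary within their sets, $\sigma[k]\in\{0,1\}$, and sets $\mathcal{U}$, $\mathcal{S}\subset\mathcal{X}$ satisfying the standing assumptions in the context. Let $(A_K,B_K,C_K,D_K)$ be a controller realization with state dimension $n_K$ such that $A_{CL}=\begin{bmatrix}A+BD_K & BC_K\\ B_K & A_K\end{bmatrix}$ is Schur, and let polyhedral $\Omega_I\subset\mathbb{R}^n$, $\Omega_O\subset\mathbb{R}^{n+n_K}$ containing the respective origins satisfy I1)–I3) and O1)–O4) (with respect to this realization). Let $\mathbf{K}(z):=C_K(zI_{n_K}-A_K)^{-1}B_K+D_K$, and let $(A_K',B_K',C_K',D_K')$ be any other state-space realization of $\mathbf{K}(z)$ (of any state dimension). Then, if $x[k_0]\in\mathcal{S}_c$ and Algorithm 1 is applied with its Control step (and its controller-state resets to zero) using the realization $(A_K',B_K',C_K',D_K')$ instead of $(A_K,B_K,C_K,D_K)$, the following still hold: (a) $x[k]\in\mathcal{X}$ and $u[k]\in\mathcal{U}$ for all $k\ge k_0$; (b) there exists $T_{\max}\in\mathbb{N}_{>0}$ such that if $\sigma[k_0]=1$ then $\sigma[k_0+T_0]=0$ for some $T_0\in\{1,\dots,T_{\max}\}$, and for every $k>k_0$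 with $\sigma[k]=1$, $\sigma[k-1]=0$, there is $T\in\{1,\dots,T_{\max}\}$ with $\sigma[k+T]=0$; (c) for all $k\ge k_0$, $\sigma[k]=0$ implies $x[k]\in\mathcal{S}$.
   Context: Notation: $\oplus$ Minkowski sum, $\ominus$ Pontryagin difference, $(-\mathcal{X})=\{-x:x\in\mathcal{X}\}$, $\mathrm{conv}$ convex hull, $\|\cdot\|$ Euclidean / induced 2-norm. Standing assumptions: $\mathcal{D},\mathcal{W},\mathcal{V},\mathcal{S},\mathcal{X}\subset\mathbb{R}^n$ and $\mathcal{U}\subset\mathbb{R}^m$ are polytopes containing the origin in their interiors; $\mathcal{S}\subset\mathcal{X}$; there exist $\varepsilon_p,\varepsilon_m\in(0,1)$ with $\mathcal{V}\subseteq\varepsilon_p\mathcal{S}$, $(-\mathcal{V})\subseteq\varepsilon_m\mathcal{S}$; some closed Euclidean ball of positive radius centered at $0$ lies in $\mathcal{S}$; $\mathcal{S}^+:=A\mathcal{S}\oplus\mathcal{W}\oplus\mathcal{D}\subseteq\mathcal{X}$. Define $\mathcal{S}_c:=\mathrm{conv}(\mathcal{S},\mathcal{S}^+)$, $\mathcal{Z}:=\mathcal{W}\times\mathcal{V}$, $\mathcal{N}:=(-\mathcal{V})\oplus\mathcal{V}$, $B_{CL}=\begin{bmatrix}I_n & BD_K\\ O & B_K\end{bmatrix}$, $C_{CL}=[D_K\ C_K]$, $D_{CL}=[O\ D_K]$. Conditions: I1) $\Omega_I\subseteq\varepsilon_s\mathcal{S}$ for a given $\varepsilon_s\in(0,1)$;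 I2) there is $\alpha>0$ with $\{r:\|r\|\le\alpha\}\subseteq\Omega_I\ominus\mathcal{N}$; I3) there is $\beta\in(0,1)$ with $\bigoplus_{i=0}^N[I_n\ O]A_{CL}^iB_{CL}\mathcal{Z}\subseteq\beta(\Omega_I\ominus\mathcal{N})$ for all $N\in\mathbb{N}$; O1) $\mathcal{S}_c\times\{0_{n_K}\}\subseteq\Omega_O$; O2) $A_{CL}\Omega_O\oplus B_{CL}\mathcal{Z}\subseteq\Omega_O$; O3) $[I_n\ O]\Omega_O\subseteq\mathcal{X}$; O4) $C_{CL}\Omega_O\oplus D_{CL}\mathcal{Z}\subseteq\mathcal{U}$. Algorithm 1 (with a controller realization $(\hat A,\hat B,\hat C,\hat D)$ of state $\hat x_K$). Initialization: read $y[k_0]$; if $y[k_0]\in\mathcal{S}\ominus(-\mathcal{V})$, set $\sigma[k_0]=0$, $u[k_0]=0$, $k=k_0+1$, go to Monitoring; else set $k=k_0$, $\sigma[k]=1$, $\hat x_K[k]=0$, go to Control. Monitoring: read $y[k]$. If $y[k]\in\mathcal{S}\ominus(-\mathcal{V})$: if $\sigma[k-1]=1$ and $y[k]\notin\Omega_I\ominus(-\mathcal{V})$, set $\sigma[k]=1$ and go to Control; else set $\sigma[k]=0$, $u[k]=0$, increment $k$, go to Monitoring. Otherwise: if $\sigma[k-1]=0$ set $\hat x_K[k]=0$; set $\sigma[k]=1$ and go to Control. Control: $u[k]=\hat C\hat x_K[k]+\hat D y[k]$, $\hat x_K[k+1]=\hat A\hat x_K[k]+\hat By[k]$, increment $k$,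 go to Monitoring. *)

theory Defs
  imports "HOL-Analysis.Analysis"
begin

text \<open>Minkowski sum, Pontryagin difference.\<close>
definition msum :: "'a::ab_group_add set \<Rightarrow> 'a set \<Rightarrow> 'a set" (infixl "\<oplus>\<^sub>M" 65) where
  "A \<oplus>\<^sub>M B = {a + b | a b. a \<in> A \<and> b \<in> B}"

definition pdiff :: "'a::ab_group_add set \<Rightarrow> 'a set \<Rightarrow> 'a set" (infixl "\<ominus>\<^sub>P" 65) where
  "A \<ominus>\<^sub>P B = {x. \<forall>b\<in>B. x + b \<in> A}"

text \<open>Iterated Minkowski sum  F 0 + ... + F N.\<close>
fun msums :: "(nat \<Rightarrow> 'a::ab_group_add set) \<Rightarrow> nat \<Rightarrow> 'a set" where
  "msums F 0 = F 0"
| "msums F (Suc N) = msums F N \<oplus>\<^sub>M F (Suc N)"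

text \<open>Complexification of a real matrix.\<close>
definition cmat :: "real^'c^'r \<Rightarrow> complex^'c^'r" where
  "cmat M = (\<chi> i j. complex_of_real (M $ i $ j))"

text \<open>Schur matrix: every (complex) eigenvalue lies in the open unit disc.\<close>
definition schur :: "real^'n^'n \<Rightarrow> bool" where
  "schur M \<longleftrightarrow> (\<forall>lam::complex. det (mat lam - cmat M) = 0 \<longrightarrow> cmod lam < 1)"

text \<open>Transfer matrix  K(z) = C_K (z I - A_K)^{-1} B_K + D_K .\<close>
definition tf :: "real^'k^'k \<Rightarrow> real^'n^'k \<Rightarrow> real^'k^'m \<Rightarrow> real^'n^'m \<Rightarrow> complex \<Rightarrow> complex^'n^'m" where
  "tf AK BK CK DK z = cmat CK ** matrix_inv (mat z - cmat AK) ** cmat BK + cmat DK"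

text \<open>Two realizations realize the same transfer matrix (equality as rational
  matrix functions, i.e. equality wherever both are defined).\<close>
definition same_tf ::
  "real^'k^'k \<Rightarrow> real^'n^'k \<Rightarrow> real^'k^'m \<Rightarrow> real^'n^'m \<Rightarrow>
   real^'l^'l \<Rightarrow> real^'n^'l \<Rightarrow> real^'l^'m \<Rightarrow> real^'n^'m \<Rightarrow> bool" where
  "same_tf AK BK CK DK AK' BK' CK' DK' \<longleftrightarrow>
     (\<forall>z. det (mat z - cmat AK) \<noteq> 0 \<longrightarrow> det (mat z - cmat AK') \<noteq> 0 \<longrightarrow>
          tf AK BK CK DK z = tf AK' BK' CK' DK' z)"

text \<open>Closed-loop matrices; the closed-loop state space R^(n+n_K) is indexed by 'n + 'k.\<close>
definition ACL :: "real^'n^'n \<Rightarrow> real^'m^'n \<Rightarrow> real^'k^'k \<Rightarrow> real^'n^'k \<Rightarrow> real^'k^'m \<Rightarrow> real^'n^'m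
                   \<Rightarrow> real^('n + 'k)^('n + 'k)" where
  "ACL A B AK BK CK DK = (\<chi> r c. case r of
       Inl i \<Rightarrow> (case c of Inl j \<Rightarrow> (A + B ** DK) $ i $ j | Inr j \<Rightarrow> (B ** CK) $ i $ j)
     | Inr i \<Rightarrow> (case c of Inl j \<Rightarrow> BK $ i $ j | Inr j \<Rightarrow> AK $ i $ j))"

text \<open>Stacking [x; xK] and projection [I_n O].\<close>
definition stack :: "real^'n::finite \<Rightarrow> real^'k::finite \<Rightarrow> real^('n + 'k)" where
  "stack x xk = (\<chi> r. case r of Inl i \<Rightarrow> x $ i | Inr j \<Rightarrow> xk $ j)"

definition projx :: "real^('n::finite + 'k::finite) \<Rightarrow> real^'n" where
  "projx z = (\<chi> i. z $ Inl i)"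

definition projk :: "real^('n::finite + 'k::finite) \<Rightarrow> real^'k" where
  "projk z = (\<chi> j. z $ Inr j)"

text \<open>B_CL [w; v] = [w + B D_K v; B_K v],  C_CL xi = D_K x + C_K xK,  D_CL [w; v] = D_K v.\<close>
definition BCL :: "real^'m^'n \<Rightarrow> real^'n^'k \<Rightarrow> real^'n^'m \<Rightarrow> (real^'n) \<times> (real^'n) \<Rightarrow> real^('n + 'k)" where
  "BCL B BK DK wv = stack (fst wv + B *v (DK *v snd wv)) (BK *v snd wv)"

definition CCL :: "real^'k^'m \<Rightarrow> real^'n^'m \<Rightarrow> real^('n + 'k) \<Rightarrow> real^'m" where
  "CCL CK DK z = DK *v projx z + CK *v projk z"

definition DCL :: "real^'n^'m \<Rightarrow> (real^'n) \<times> (real^'n) \<Rightarrow> real^'m" where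
  "DCL DK wv = DK *v snd wv"

text \<open>Algorithm 1 with controller realization (Ah,Bh,Ch,Dh), started at time k0.
  sg k = 1 means sigma[k] = 1.  In the Control step the controller state at time k+1
  is updated; when sigma[k] = 0 the algorithm leaves xh unconstrained (it is reset
  before next use).\<close>
definition algorithm1 ::
  "(real^'n) set \<Rightarrow> (real^'n) set \<Rightarrow> (real^'n) set \<Rightarrow>
   real^'l^'l \<Rightarrow> real^'n^'l \<Rightarrow> real^'l^'m \<Rightarrow> real^'n^'m \<Rightarrow>
   nat \<Rightarrow> (nat \<Rightarrow> real^'n) \<Rightarrow> (nat \<Rightarrow> nat) \<Rightarrow> (nat \<Rightarrow> real^'m) \<Rightarrow> (nat \<Rightarrow> real^'l) \<Rightarrow> bool" where
  "algorithm1 S V OmI Ah Bh Ch Dh k0 y sg u xh \<longleftrightarrow>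
     (y k0 \<in> S \<ominus>\<^sub>P (uminus ` V) \<longrightarrow> sg k0 = 0 \<and> u k0 = 0) \<and>
     (y k0 \<notin> S \<ominus>\<^sub>P (uminus ` V) \<longrightarrow> sg k0 = 1 \<and> xh k0 = 0) \<and>
     (\<forall>k>k0.
        (if y k \<in> S \<ominus>\<^sub>P (uminus ` V) then
           (if sg (k - 1) = 1 \<and> y k \<notin> OmI \<ominus>\<^sub>P (uminus ` V) then sg k = 1
            else sg k = 0 \<and> u k = 0)
         else (sg (k - 1) = 0 \<longrightarrow> xh k = 0) \<and> sg k = 1)) \<and>
     (\<forall>k\<ge>k0. sg k = 1 \<longrightarrow>
        u k = Ch *v xh k + Dh *v y k \<and> xh (Suc k) = Ah *v xh k + Bh *v y k)"

text \<open>Plant: x[k+1] = A x + sigma B u + (1 - sigma) d + w,  y = x + v, disturbances in their sets.\<close>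
definition plant ::
  "real^'n^'n \<Rightarrow> real^'m^'n \<Rightarrow> (real^'n) set \<Rightarrow> (real^'n) set \<Rightarrow> (real^'n) set \<Rightarrow> nat \<Rightarrow>
   (nat \<Rightarrow> real^'n) \<Rightarrow> (nat \<Rightarrow> real^'n) \<Rightarrow> (nat \<Rightarrow> nat) \<Rightarrow> (nat \<Rightarrow> real^'m) \<Rightarrow>
   (nat \<Rightarrow> real^'n) \<Rightarrow> (nat \<Rightarrow> real^'n) \<Rightarrow> (nat \<Rightarrow> real^'n) \<Rightarrow> bool" where
  "plant A B D W V k0 x y sg u d w v \<longleftrightarrow>
     (\<forall>k\<ge>k0. d k \<in> D \<and> w k \<in> W \<and> v k \<in> V \<and> y k = x k + v k \<and>
        x (Suc k) = A *v x k + real (sg k) *\<^sub>R (B *v u k) + (1 - real (sg k)) *\<^sub>R d k + w k)"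

end

theory Submission
  imports "Jordan_Normal_Form.Spectral_Radius" Defs
begin

no_notation Matrix.vec_index (infixl "$" 100)
no_notation Matrix.scalar_prod (infix "\<bullet>" 70)


lemma if0_mult: "(if P then a else 0) * (q::'a::semiring_0) = (if P then a*q else 0)" by simp

lemma matc_mult: "Finite_Cartesian_Product.mat (c::'a::comm_ring_1) *v x = c *s x"
  by (simp add: vec_eq_iff matrix_vector_mult_def mat_def if0_mult sum.delta)

lemma det0_iff_eig:
  fixes Mc :: "complex^'a^'a"
  shows "Determinants.det (Finite_Cartesian_Product.mat lam - Mc) = 0 \<longleftrightarrow> (\<exists>x. x \<noteq> 0 \<and> Mc *v x = lam *s x)"
proof -
  have "Determinants.det (Finite_Cartesian_Product.mat lam - Mc) = 0 \<longleftrightarrow> \<not> invertible (Finite_Cartesian_Product.mat lam - Mc)"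
    by (simp add: invertible_det_nz)
  also have "\<dots> \<longleftrightarrow> (\<exists>x. x \<noteq> 0 \<and> (Finite_Cartesian_Product.mat lam - Mc) *v x = 0)"
    unfolding invertible_left_inverse matrix_left_invertible_ker by blast
  also have "\<dots> \<longleftrightarrow> (\<exists>x. x \<noteq> 0 \<and> Mc *v x = lam *s x)"
    by (simp add: matrix_vector_mult_diff_rdistrib matc_mult) metis
  finally show ?thesis .
qed

definition tj :: "(nat \<Rightarrow> 'a::finite) \<Rightarrow> complex^'a^'a \<Rightarrow> complex Matrix.mat" where
  "tj h Mc = Matrix.mat CARD('a) CARD('a) (\<lambda>(i,j). Mc $ h i $ h j)"

definition tv :: "(nat \<Rightarrow> 'a::finite) \<Rightarrow> complex^'a \<Rightarrow> complex Matrix.vec" where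
  "tv h x = Matrix.vec CARD('a) (\<lambda>i. x $ h i)"

lemma tj_carrier[simp]: "tj h Mc \<in> carrier_mat CARD('a) CARD('a)" for h :: "nat \<Rightarrow> 'a::finite"
  by (simp add: tj_def)

lemma tv_carrier[simp]: "tv h x \<in> carrier_vec CARD('a)" for h :: "nat \<Rightarrow> 'a::finite"
  by (simp add: tv_def)

lemma dim_tv[simp]: "dim_vec (tv h x) = CARD('a)" for h :: "nat \<Rightarrow> 'a::finite"
  by (simp add: tv_def)

lemma tv_index[simp]: "i < CARD('a) \<Longrightarrow> vec_index (tv h x) i = x $ h i" for h :: "nat \<Rightarrow> 'a::finite"
  by (simp add: tv_def)

lemma tj_mult:
  fixes h :: "nat \<Rightarrow> 'a::finite"
  assumes h: "bij_betw h {0..<CARD('a)} UNIV"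
  shows "tj h Mc *\<^sub>v tv h x = tv h (Mc *v x)"
proof (rule eq_vecI)
  show "dim_vec (tj h Mc *\<^sub>v tv h x) = dim_vec (tv h (Mc *v x))" by (simp add: tj_def tv_def)
  fix i assume i: "i < dim_vec (tv h (Mc *v x))"
  hence i': "i < CARD('a)" by (simp add: tv_def)
  have "vec_index (tj h Mc *\<^sub>v tv h x) i = (\<Sum>j\<in>{0..<CARD('a)}. Mc $ h i $ h j * x $ h j)"
    using i' by (simp add: tj_def tv_def scalar_prod_def)
  also have "\<dots> = (\<Sum>b\<in>UNIV. Mc $ h i $ b * x $ b)"
    using sum.reindex_bij_betw[OF h, of "\<lambda>b. Mc $ h i $ b * x $ b"] by simp
  also have "\<dots> = vec_index (tv h (Mc *v x)) i"
    using i' by (simp add: matrix_vector_mult_def)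
  finally show "vec_index (tj h Mc *\<^sub>v tv h x) i = vec_index (tv h (Mc *v x)) i" .
qed

lemma tj_pow:
  fixes h :: "nat \<Rightarrow> 'a::finite"
  assumes h: "bij_betw h {0..<CARD('a)} UNIV"
  shows "(tj h Mc ^\<^sub>m k) *\<^sub>v tv h x = tv h ((((*v) Mc) ^^ k) x)"
proof (induction k arbitrary: x)
  case 0
  have "tj h Mc ^\<^sub>m 0 = 1\<^sub>m CARD('a)" by (simp add: tj_def)
  then show ?case by simp
next
  case (Suc k)
  have "(tj h Mc ^\<^sub>m Suc k) *\<^sub>v tv h x = (tj h Mc ^\<^sub>m k * tj h Mc) *\<^sub>v tv h x" by simp
  also have "\<dots> = (tj h Mc ^\<^sub>m k) *\<^sub>v (tj h Mc *\<^sub>v tv h x)"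
  proof -
    have "tj h Mc ^\<^sub>m k \<in> carrier_mat CARD('a) CARD('a)" by (rule pow_carrier_mat) simp
    then show ?thesis by (rule assoc_mult_mat_vec[OF _ tj_carrier tv_carrier])
  qed
  also have "\<dots> = tv h ((((*v) Mc) ^^ k) (Mc *v x))" by (simp add: tj_mult[OF h] Suc)
  also have "\<dots> = tv h ((((*v) Mc) ^^ Suc k) x)" by (simp add: funpow_Suc_right del: funpow.simps)
  finally show ?case .
qed

lemma tv_inj:
  fixes h :: "nat \<Rightarrow> 'a::finite"
  assumes h: "bij_betw h {0..<CARD('a)} UNIV" and e: "tv h x = tv h y"
  shows "x = y"
proof -
  { fix a :: 'a
    obtain i where i: "i < CARD('a)" "a = h i" using h unfolding bij_betw_def by (metis UNIV_I atLeastLessThan_iff imageE)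
    have "x $ a = y $ a" using arg_cong[OF e, of "\<lambda>v. vec_index v i"] i by simp }
  then show ?thesis by (simp add: vec_eq_iff)
qed

lemma tv_surj:
  fixes h :: "nat \<Rightarrow> 'a::finite"
  assumes h: "bij_betw h {0..<CARD('a)} UNIV" and v: "v \<in> carrier_vec CARD('a)"
  shows "\<exists>x. v = tv h x"
proof
  let ?g = "the_inv_into {0..<CARD('a)} h"
  show "v = tv h (\<chi> a. vec_index v (?g a))"
  proof (rule eq_vecI)
    fix i assume "i < dim_vec (tv h (\<chi> a. vec_index v (?g a)))"
    hence i: "i < CARD('a)" by (simp add: tv_def)
    have "?g (h i) = i" using h i by (simp add: bij_betw_def the_inv_into_f_f)
    then show "vec_index v i = vec_index (tv h (\<chi> a. vec_index v (?g a))) i" using i by simp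
  qed (use v in \<open>simp add: tv_def\<close>)
qed

lemma tv_zero: "tv h 0 = 0\<^sub>v CARD('a)" for h :: "nat \<Rightarrow> 'a::finite"
  by (rule eq_vecI) (auto simp: tv_def)

lemma tv_smult: "tv h (c *s x) = c \<cdot>\<^sub>v tv h x" for h :: "nat \<Rightarrow> 'a::finite"
  by (rule eq_vecI) (auto simp: tv_def)

lemma eig_B3:
  fixes h :: "nat \<Rightarrow> 'a::finite"
  assumes h: "bij_betw h {0..<CARD('a)} UNIV" and ev: "eigenvalue (tj h Mc) lam"
  shows "\<exists>x. x \<noteq> 0 \<and> Mc *v x = lam *s x"
proof -
  obtain v where v: "v \<in> carrier_vec CARD('a)" "v \<noteq> 0\<^sub>v CARD('a)" "tj h Mc *\<^sub>v v = lam \<cdot>\<^sub>v v"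
    using ev unfolding eigenvalue_def eigenvector_def by (auto simp: tj_def)
  obtain x where x: "v = tv h x" using tv_surj[OF h v(1)] by blast
  have "x \<noteq> 0" using v(2) x tv_zero by metis
  moreover have "tv h (Mc *v x) = tv h (lam *s x)" using v(3) x tj_mult[OF h] tv_smult by metis
  hence "Mc *v x = lam *s x" using tv_inj[OF h] by blast
  ultimately show ?thesis by blast
qed

lemma eig_B4:
  fixes h :: "nat \<Rightarrow> 'a::finite"
  assumes h: "bij_betw h {0..<CARD('a)} UNIV" and x: "x \<noteq> 0" "Mc *v x = lam *s x"
  shows "eigenvalue (tj h Mc) lam"
  unfolding eigenvalue_def eigenvector_def
proof (intro exI conjI)
  show "tv h x \<in> carrier_vec (dim_row (tj h Mc))" by (simp add: tj_def)
  show "tv h x \<noteq> 0\<^sub>v (dim_row (tj h Mc))" using x(1) tv_inj[OF h, of x 0] by (simp add: tj_def tv_zero) blast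
  show "tj h Mc *\<^sub>v tv h x = lam \<cdot>\<^sub>v tv h x" using x(2) by (simp add: tj_mult[OF h] tv_smult)
qed

lemma cmat_mult_cv: "cmat M *v (\<chi> i. complex_of_real (x $ i)) = (\<chi> i. complex_of_real ((M *v x) $ i))"
  by (simp add: vec_eq_iff cmat_def matrix_vector_mult_def)

lemma cmat_pow_cv: "(((*v) (cmat M)) ^^ k) (\<chi> i. complex_of_real (x $ i)) = (\<chi> i. complex_of_real (((((*v) M) ^^ k) x) $ i))"
  for M :: "real^'a^'a"
proof (induction k arbitrary: x)
  case 0
  show ?case by simp
next
  case (Suc k)
  show ?case unfolding funpow_Suc_right o_def cmat_mult_cv Suc by simp
qed

lemma powv_scaleR: "(((*v) M) ^^ k) (c *\<^sub>R x) = c *\<^sub>R ((((*v) M) ^^ k) x)" for M :: "real^'a^'a"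
  by (induction k arbitrary: x) (simp_all add: funpow_Suc_right funpow_0 matrix_vector_mult_scaleR del: funpow.simps)

lemma powv_add: "(((*v) M) ^^ k) (x + y) = (((*v) M) ^^ k) x + (((*v) M) ^^ k) y" for M :: "real^'a^'a"
  by (induction k arbitrary: x y) (simp_all add: funpow_Suc_right funpow_0 matrix_vector_right_distrib del: funpow.simps)

lemma powv_zero: "(((*v) M) ^^ k) 0 = 0" for M :: "real^'a^'a"
  by (induction k) (simp_all add: funpow_Suc_right funpow_0 del: funpow.simps)

lemma powv_sum: "(((*v) M) ^^ k) (sum f I) = (\<Sum>i\<in>I. (((*v) M) ^^ k) (f i))" for M :: "real^'a^'a"
  by (induction I rule: infinite_finite_induct) (simp_all add: powv_zero powv_add)

lemma powv_Suc: "(((*v) M) ^^ Suc k) x = M *v ((((*v) M) ^^ k) x)"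
  by simp

lemma scaled_pow: "(((*v) (c *\<^sub>R M)) ^^ k) x = c ^ k *\<^sub>R ((((*v) M) ^^ k) x)"
  for M :: "real^'a^'a"
  by (induction k arbitrary: x)
     (simp_all add: funpow_Suc_right funpow_0 scaleR_matrix_vector_assoc[symmetric] matrix_vector_mult_scaleR powv_scaleR del: funpow.simps)

lemma cmat_scaleR_mult: "cmat (c *\<^sub>R M) *v x = complex_of_real c *s (cmat M *v x)"
  by (simp add: vec_eq_iff cmat_def matrix_vector_mult_def sum_distrib_left mult.assoc)

lemma sum_le_card_norm: "(\<Sum>b\<in>UNIV. \<bar>x $ b\<bar>) \<le> real CARD('a) * norm x" for x :: "real^'a"
proof -
  have "(\<Sum>b\<in>UNIV. \<bar>x $ b\<bar>) \<le> (\<Sum>b\<in>(UNIV::'a set). norm x)"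
    by (rule sum_mono) (metis component_le_norm_cart real_norm_def)
  then show ?thesis by simp
qed

lemma schur_decay:
  fixes M :: "real^'a^'a"
  assumes sch: "schur M"
  shows "\<exists>c r. 0 < r \<and> r < 1 \<and> 0 \<le> c \<and> (\<forall>k x. norm ((((*v) M) ^^ k) x) \<le> c * r^k * norm x)"
proof -
  let ?n = "CARD('a)"
  obtain h :: "nat \<Rightarrow> 'a" where h: "bij_betw h {0..<?n} UNIV"
    using ex_bij_betw_nat_finite[of "UNIV::'a set"] by auto
  define Mj where "Mj = tj h (cmat M)"
  have Mj: "Mj \<in> carrier_mat ?n ?n" by (simp add: Mj_def)
  have n0: "0 < ?n" by simp
  define rho where "rho = spectral_radius Mj"
  from spectral_radius_mem_max(1)[OF Mj n0] obtain ev where ev: "ev \<in> spectrum Mj" "rho = norm ev"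
    unfolding rho_def by auto
  have rho1: "rho < 1"
  proof -
    from ev have "eigenvalue Mj ev" by (simp add: spectrum_def)
    then obtain x where "x \<noteq> 0" "cmat M *v x = ev *s x" using eig_B3[OF h] unfolding Mj_def by blast
    then have "Determinants.det (Finite_Cartesian_Product.mat ev - cmat M) = 0" using det0_iff_eig by blast
    then have "cmod ev < 1" using sch unfolding schur_def by blast
    then show ?thesis using ev by simp
  qed
  have rho0: "0 \<le> rho" using ev by simp
  define r where "r = (1 + rho) / 2"
  have r: "0 < r" "r < 1" "rho < r" using rho0 rho1 by (auto simp: r_def)
  define Mr where "Mr = (1/r) *\<^sub>R M"
  define Mrj where "Mrj = tj h (cmat Mr)"
  have Mrj: "Mrj \<in> carrier_mat ?n ?n" by (simp add: Mrj_def)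
  have sr: "spectral_radius Mrj < 1"
  proof -
    from spectral_radius_mem_max(1)[OF Mrj n0] obtain mu where mu: "mu \<in> spectrum Mrj" "spectral_radius Mrj = norm mu"
      by auto
    from mu have "eigenvalue Mrj mu" by (simp add: spectrum_def)
    then obtain x where x: "x \<noteq> 0" "cmat Mr *v x = mu *s x" using eig_B3[OF h] unfolding Mrj_def by blast
    have "cmat M *v x = complex_of_real r *s (cmat Mr *v x)"
      using r(1) by (simp add: Mr_def cmat_scaleR_mult vector_smult_assoc flip: of_real_mult)
    also have "\<dots> = (complex_of_real r * mu) *s x" using x(2) by (simp add: vector_smult_assoc)
    finally have "eigenvalue Mj (complex_of_real r * mu)" using eig_B4[OF h x(1)] unfolding Mj_def by blast
    then have "norm (complex_of_real r * mu) \<le> rho"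
      using spectral_radius_mem_max(2)[OF Mj n0] unfolding rho_def spectrum_def by blast
    then have "r * norm mu \<le> rho" using r by (simp add: norm_mult)
    then have "r * norm mu < r * 1" using r by linarith
    then have "norm mu < 1" using r(1) mult_less_cancel_left_pos by blast
    then show ?thesis using mu by simp
  qed
  obtain c where c: "\<And>k. norm_bound (Mrj ^\<^sub>m k) c"
    using spectral_radius_jnf_norm_bound_less_1_upper_triangular[OF Mrj sr] by blast
  have c0: "0 \<le> c" using c[of 0] n0 Mrj unfolding norm_bound_def
    by (metis norm_ge_zero order_trans pow_mat_dim_square)
  have main: "norm ((((*v) M) ^^ k) x) \<le> (?n * ?n * c) * r^k * norm x" for k x
  proof -
    define X where "X = (((*v) M) ^^ k) x"
    define cx where "cx = (\<chi> b. complex_of_real (x $ b))"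
    have comp: "\<bar>X $ a\<bar> \<le> r^k * (c * (\<Sum>b\<in>UNIV. \<bar>x $ b\<bar>))" for a
    proof -
      obtain i where i: "i < ?n" "a = h i" using h unfolding bij_betw_def
        by (metis UNIV_I atLeastLessThan_iff imageE)
      have e1: "(((*v) (cmat Mr)) ^^ k) cx = (\<chi> b. complex_of_real ((1/r)^k * X $ b))"
        unfolding cx_def cmat_pow_cv by (simp add: Mr_def scaled_pow X_def)
      have "complex_of_real ((1/r)^k * X $ a) = vec_index (tv h ((((*v) (cmat Mr)) ^^ k) cx)) i"
        using i by (simp add: e1)
      also have "\<dots> = vec_index ((Mrj ^\<^sub>m k) *\<^sub>v tv h cx) i"
        unfolding Mrj_def tj_pow[OF h] ..
      also have "\<dots> = (\<Sum>j\<in>{0..<?n}. (Mrj ^\<^sub>m k) $$ (i, j) * cx $ h j)"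
        using i Mrj by (auto simp: scalar_prod_def intro!: sum.cong)
      finally have eq: "complex_of_real ((1/r)^k * X $ a) = (\<Sum>j\<in>{0..<?n}. (Mrj ^\<^sub>m k) $$ (i, j) * cx $ h j)" .
      have "norm (\<Sum>j\<in>{0..<?n}. (Mrj ^\<^sub>m k) $$ (i, j) * cx $ h j) \<le> (\<Sum>j\<in>{0..<?n}. c * \<bar>x $ h j\<bar>)"
      proof (rule order_trans[OF norm_sum sum_mono])
        fix j assume j: "j \<in> {0..<?n}"
        have "norm ((Mrj ^\<^sub>m k) $$ (i, j)) \<le> c" using c[of k] i j Mrj unfolding norm_bound_def by auto
        then show "norm ((Mrj ^\<^sub>m k) $$ (i, j) * cx $ h j) \<le> c * \<bar>x $ h j\<bar>"
          by (simp add: cx_def norm_mult mult_right_mono)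
      qed
      also have "\<dots> = c * (\<Sum>b\<in>UNIV. \<bar>x $ b\<bar>)"
        using sum.reindex_bij_betw[OF h, of "\<lambda>b. \<bar>x $ b\<bar>"] by (simp add: sum_distrib_left[symmetric])
      finally have ineq: "norm (\<Sum>j\<in>{0..<?n}. (Mrj ^\<^sub>m k) $$ (i, j) * cx $ h j) \<le> c * (\<Sum>b\<in>UNIV. \<bar>x $ b\<bar>)" .
      have nm: "norm (complex_of_real ((1/r)^k * X $ a)) = (1/r)^k * \<bar>X $ a\<bar>"
        using r(1) by (simp only: norm_of_real abs_mult) simp
      have "(1/r)^k * \<bar>X $ a\<bar> \<le> c * (\<Sum>b\<in>UNIV. \<bar>x $ b\<bar>)"
        using ineq unfolding eq[symmetric] nm .
      then show ?thesis using r(1) by (simp add: field_simps)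
    qed
    have "norm X \<le> (\<Sum>a\<in>UNIV. \<bar>X $ a\<bar>)" by (rule norm_le_l1_cart)
    also have "\<dots> \<le> (\<Sum>a\<in>(UNIV::'a set). r^k * (c * (real ?n * norm x)))"
    proof (rule sum_mono)
      fix a
      have "r^k * (c * (\<Sum>b\<in>UNIV. \<bar>x $ b\<bar>)) \<le> r^k * (c * (real ?n * norm x))"
        using sum_le_card_norm[of x] c0 r(1) by (intro mult_left_mono) auto
      then show "\<bar>X $ a\<bar> \<le> r^k * (c * (real ?n * norm x))" using comp[of a] by linarith
    qed
    also have "\<dots> = (?n * ?n * c) * r^k * norm x" by simp
    finally show ?thesis unfolding X_def .
  qed
  show ?thesis
    by (rule exI[of _ "?n * ?n * c"], rule exI[of _ r]) (use r c0 main in auto)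
qed


lemma lim_c_div: "((\<lambda>t::real. c / (t - K)) \<longlongrightarrow> 0) at_top"
proof (rule tendsto_divide_0[OF tendsto_const])
  have "filterlim (\<lambda>t::real. t - K) at_top at_top"
    using filterlim_tendsto_add_at_top[OF tendsto_const[of "-K"] filterlim_ident] by simp
  then show "filterlim (\<lambda>t::real. t - K) at_infinity at_top"
    by (simp add: filterlim_at_top_imp_at_infinity)
qed

definition mK :: "complex^'a^'b \<Rightarrow> real" where
  "mK A = (\<Sum>i\<in>UNIV. \<Sum>j\<in>UNIV. norm (A $ i $ j))"

lemma mK_nonneg: "0 \<le> mK A"
  unfolding mK_def by (intro sum_nonneg) auto

lemma norm_mult_vec_le: "norm (A *v x) \<le> mK A * norm x"
proof -
  have "norm (A *v x) \<le> (\<Sum>i\<in>UNIV. norm ((A *v x) $ i))"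
    unfolding norm_vec_def by (rule L2_set_le_sum) auto
  also have "\<dots> \<le> (\<Sum>i\<in>UNIV. \<Sum>j\<in>UNIV. norm (A $ i $ j) * norm x)"
  proof (rule sum_mono)
    fix i
    have "norm ((A *v x) $ i) \<le> (\<Sum>j\<in>UNIV. norm (A $ i $ j * x $ j))"
      unfolding matrix_vector_mult_def by (simp add: norm_sum)
    also have "\<dots> \<le> (\<Sum>j\<in>UNIV. norm (A $ i $ j) * norm x)"
    proof (rule sum_mono)
      fix j
      have "norm (x $ j) \<le> norm x" by (rule Finite_Cartesian_Product.norm_nth_le)
      then show "norm (A $ i $ j * x $ j) \<le> norm (A $ i $ j) * norm x"
        by (simp add: norm_mult mult_left_mono)
    qed
    finally show "norm ((A *v x) $ i) \<le> (\<Sum>j\<in>UNIV. norm (A $ i $ j) * norm x)" .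
  qed
  also have "\<dots> = mK A * norm x" by (simp add: mK_def sum_distrib_right)
  finally show ?thesis .
qed

lemma mv_smult: "A *v (c *s x) = c *s (A *v x)" for A :: "'a::comm_ring_1^'n^'m"
  by (simp add: vec_eq_iff matrix_vector_mult_def sum_distrib_left algebra_simps)

definition Rs :: "complex^'a^'a \<Rightarrow> real \<Rightarrow> complex^'a^'a" where
  "Rs A t = matrix_inv (Finite_Cartesian_Product.mat (complex_of_real t) - A)"

lemma Rs_props:
  fixes A :: "complex^'a^'a"
  assumes t: "mK A < t"
  shows "Rs A t ** (Finite_Cartesian_Product.mat (complex_of_real t) - A) = Finite_Cartesian_Product.mat 1"
    "(Finite_Cartesian_Product.mat (complex_of_real t) - A) ** Rs A t = Finite_Cartesian_Product.mat 1"
    "Determinants.det (Finite_Cartesian_Product.mat (complex_of_real t) - A) \<noteq> 0"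
proof -
  let ?E = "Finite_Cartesian_Product.mat (complex_of_real t) - A"
  have ker: "\<forall>x. ?E *v x = 0 \<longrightarrow> x = 0"
  proof (intro allI impI)
    fix x assume "?E *v x = 0"
    then have "complex_of_real t *s x = A *v x"
      by (simp add: matrix_vector_mult_diff_rdistrib matc_mult)
    then have "norm (complex_of_real t *s x) \<le> mK A * norm x" using norm_mult_vec_le[of A x] by simp
    moreover have "norm (complex_of_real t *s x) = t * norm x"
      using t mK_nonneg[of A] by (simp add: norm_vec_def L2_set_def norm_mult power_mult_distrib
          sum_distrib_left[symmetric] real_sqrt_mult)
    ultimately have "t * norm x \<le> mK A * norm x" by simp
    then have "norm x \<le> 0" using t mult_le_cancel_right[of t "norm x" "mK A"] by auto
    then show "x = 0" by simp
  qed
  then have inv: "invertible ?E"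
    unfolding invertible_left_inverse matrix_left_invertible_ker by blast
  then have "\<exists>B. ?E ** B = Finite_Cartesian_Product.mat 1 \<and> B ** ?E = Finite_Cartesian_Product.mat 1"
    unfolding invertible_def by blast
  then have "?E ** Rs A t = Finite_Cartesian_Product.mat 1 \<and> Rs A t ** ?E = Finite_Cartesian_Product.mat 1"
    unfolding Rs_def matrix_inv_def by (rule someI_ex)
  then show "Rs A t ** ?E = Finite_Cartesian_Product.mat 1" "?E ** Rs A t = Finite_Cartesian_Product.mat 1" by auto
  show "Determinants.det ?E \<noteq> 0" using inv invertible_det_nz by blast
qed

lemma Rs_id:
  fixes A :: "complex^'a^'a"
  assumes t: "mK A < t"
  shows "complex_of_real t *s (Rs A t *v y) = y + Rs A t *v (A *v y)"
proof -
  have "Rs A t *v ((Finite_Cartesian_Product.mat (complex_of_real t) - A) *v y) = y"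
    using Rs_props(1)[OF t] by (simp add: matrix_vector_mul_assoc)
  then show ?thesis
    by (simp add: matrix_vector_mult_diff_rdistrib matc_mult matrix_vector_mult_diff_distrib mv_smult
        algebra_simps)
qed

lemma Rs_bound:
  fixes A :: "complex^'a^'a"
  assumes t: "mK A < t"
  shows "norm (Rs A t *v b) \<le> norm b / (t - mK A)"
proof -
  define x where "x = Rs A t *v b"
  have "(Finite_Cartesian_Product.mat (complex_of_real t) - A) *v x = b"
    using Rs_props(2)[OF t] by (simp add: x_def matrix_vector_mul_assoc)
  then have b: "b = complex_of_real t *s x - A *v x"
    by (simp add: matrix_vector_mult_diff_rdistrib matc_mult)
  have n1: "norm (complex_of_real t *s x) = t * norm x"
    using t mK_nonneg[of A] by (simp add: norm_vec_def L2_set_def norm_mult power_mult_distrib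
          sum_distrib_left[symmetric] real_sqrt_mult)
  have "t * norm x - mK A * norm x \<le> norm b"
    using norm_triangle_ineq2[of "complex_of_real t *s x" "A *v x"] n1 norm_mult_vec_le[of A x] b by simp
  then have "(t - mK A) * norm x \<le> norm b" by (simp add: algebra_simps)
  then show ?thesis unfolding x_def[symmetric] using t by (simp add: field_simps)
qed

lemma Rs_lim:
  fixes A :: "complex^'a^'a"
  shows "((\<lambda>t. complex_of_real t *s (Rs A t *v z)) \<longlongrightarrow> z) at_top"
proof (rule LIM_zero_cancel, rule Lim_null_comparison)
  show "\<forall>\<^sub>F t in at_top. norm (complex_of_real t *s (Rs A t *v z) - z) \<le> norm (A *v z) / (t - mK A)"
    using eventually_gt_at_top[of "mK A"]
  proof (rule eventually_mono)
    fix t assume t: "mK A < t"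
    show "norm (complex_of_real t *s (Rs A t *v z) - z) \<le> norm (A *v z) / (t - mK A)"
      using Rs_id[OF t, of z] Rs_bound[OF t, of "A *v z"] by simp
  qed
  show "((\<lambda>t. norm (A *v z) / (t - mK A)) \<longlongrightarrow> 0) at_top" by (rule lim_c_div)
qed

lemma CRs_lim:
  fixes A :: "complex^'a^'a" and C :: "complex^'a^'b"
  shows "((\<lambda>t. complex_of_real t *s (C *v (Rs A t *v z))) \<longlongrightarrow> C *v z) at_top"
proof (rule LIM_zero_cancel, rule Lim_null_comparison)
  show "\<forall>\<^sub>F t in at_top. norm (complex_of_real t *s (C *v (Rs A t *v z)) - C *v z)
          \<le> mK C * norm (complex_of_real t *s (Rs A t *v z) - z)"
  proof (rule always_eventually, rule allI)
    fix t
    have "complex_of_real t *s (C *v (Rs A t *v z)) - C *v z = C *v (complex_of_real t *s (Rs A t *v z) - z)"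
      by (simp add: mv_smult matrix_vector_mult_diff_distrib)
    then show "norm (complex_of_real t *s (C *v (Rs A t *v z)) - C *v z)
          \<le> mK C * norm (complex_of_real t *s (Rs A t *v z) - z)"
      using norm_mult_vec_le by metis
  qed
  have "((\<lambda>t. complex_of_real t *s (Rs A t *v z) - z) \<longlongrightarrow> 0) at_top"
    using Rs_lim[of A z] by (rule LIM_zero)
  then have "((\<lambda>t. norm (complex_of_real t *s (Rs A t *v z) - z)) \<longlongrightarrow> 0) at_top"
    by (rule tendsto_norm_zero)
  then show "((\<lambda>t. mK C * norm (complex_of_real t *s (Rs A t *v z) - z)) \<longlongrightarrow> 0) at_top"
    by (rule tendsto_mult_right_zero)
qed

lemma G_lim0:
  fixes A :: "complex^'a^'a" and C :: "complex^'a^'b"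
  shows "((\<lambda>t. C *v (Rs A t *v y)) \<longlongrightarrow> 0) at_top"
proof (rule Lim_null_comparison)
  show "\<forall>\<^sub>F t in at_top. norm (C *v (Rs A t *v y)) \<le> (mK C * norm y) / (t - mK A)"
    using eventually_gt_at_top[of "mK A"]
  proof (rule eventually_mono)
    fix t assume t: "mK A < t"
    have "norm (C *v (Rs A t *v y)) \<le> mK C * norm (Rs A t *v y)" by (rule norm_mult_vec_le)
    also have "\<dots> \<le> mK C * (norm y / (t - mK A))"
      by (rule mult_left_mono[OF Rs_bound[OF t] mK_nonneg])
    finally show "norm (C *v (Rs A t *v y)) \<le> (mK C * norm y) / (t - mK A)" by simp
  qed
  show "((\<lambda>t. (mK C * norm y) / (t - mK A)) \<longlongrightarrow> 0) at_top" by (rule lim_c_div)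
qed

lemma markov_eq:
  fixes A :: "complex^'k^'k" and B :: "complex^'n^'k" and C :: "complex^'k^'m" and D :: "complex^'n^'m"
    and A' :: "complex^'l^'l" and B' :: "complex^'n^'l" and C' :: "complex^'l^'m" and D' :: "complex^'n^'m"
  assumes ev: "\<forall>\<^sub>F t in at_top. C *v (Rs A t *v (B *v b)) + D *v b = C' *v (Rs A' t *v (B' *v b)) + D' *v b"
  shows "D *v b = D' *v b"
    "C *v ((((*v) A)^^N) (B *v b)) = C' *v ((((*v) A')^^N) (B' *v b))"
proof -
  have l1: "((\<lambda>t. C *v (Rs A t *v (B *v b)) + D *v b) \<longlongrightarrow> 0 + D *v b) at_top"
    by (intro tendsto_add G_lim0 tendsto_const)
  have l2: "((\<lambda>t. C' *v (Rs A' t *v (B' *v b)) + D' *v b) \<longlongrightarrow> 0 + D' *v b) at_top"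
    by (intro tendsto_add G_lim0 tendsto_const)
  have l1': "((\<lambda>t. C' *v (Rs A' t *v (B' *v b)) + D' *v b) \<longlongrightarrow> 0 + D *v b) at_top"
    using l1 tendsto_cong[OF ev] by blast
  show DD: "D *v b = D' *v b" using tendsto_unique[OF _ l1' l2] by simp
  define Q where "Q N t = C *v (Rs A t *v ((((*v) A)^^N) (B *v b)))" for N t
  define Q' where "Q' N t = C' *v (Rs A' t *v ((((*v) A')^^N) (B' *v b)))" for N t
  have hN: "C *v ((((*v) A)^^N) (B *v b)) = C' *v ((((*v) A')^^N) (B' *v b))"
    if e: "\<forall>\<^sub>F t in at_top. Q N t = Q' N t" for N
  proof -
    have a: "((\<lambda>t. complex_of_real t *s Q N t) \<longlongrightarrow> C *v ((((*v) A)^^N) (B *v b))) at_top"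
      unfolding Q_def by (rule CRs_lim)
    have b: "((\<lambda>t. complex_of_real t *s Q' N t) \<longlongrightarrow> C' *v ((((*v) A')^^N) (B' *v b))) at_top"
      unfolding Q'_def by (rule CRs_lim)
    have e2: "\<forall>\<^sub>F t in at_top. complex_of_real t *s Q N t = complex_of_real t *s Q' N t"
      using e by (rule eventually_mono) simp
    have a': "((\<lambda>t. complex_of_real t *s Q' N t) \<longlongrightarrow> C *v ((((*v) A)^^N) (B *v b))) at_top"
      using a tendsto_cong[OF e2] by blast
    show ?thesis using tendsto_unique[OF _ a' b] by simp
  qed
  have rec: "Q (Suc N) t = complex_of_real t *s Q N t - C *v ((((*v) A)^^N) (B *v b))"
    if t: "mK A < t" for N t
  proof -
    let ?z = "(((*v) A)^^N) (B *v b)"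
    have "complex_of_real t *s Q N t = C *v (complex_of_real t *s (Rs A t *v ?z))"
      by (simp add: Q_def mv_smult)
    also have "\<dots> = C *v ?z + Q (Suc N) t"
      unfolding Rs_id[OF t] by (simp add: Q_def matrix_vector_right_distrib)
    finally show ?thesis by simp
  qed
  have rec': "Q' (Suc N) t = complex_of_real t *s Q' N t - C' *v ((((*v) A')^^N) (B' *v b))"
    if t: "mK A' < t" for N t
  proof -
    let ?z = "(((*v) A')^^N) (B' *v b)"
    have "complex_of_real t *s Q' N t = C' *v (complex_of_real t *s (Rs A' t *v ?z))"
      by (simp add: Q'_def mv_smult)
    also have "\<dots> = C' *v ?z + Q' (Suc N) t"
      unfolding Rs_id[OF t] by (simp add: Q'_def matrix_vector_right_distrib)
    finally show ?thesis by simp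
  qed
  have "\<forall>\<^sub>F t in at_top. Q N t = Q' N t" for N
  proof (induction N)
    case 0
    show ?case using ev by (rule eventually_mono) (simp add: Q_def Q'_def DD)
  next
    case (Suc N)
    have h: "C *v ((((*v) A)^^N) (B *v b)) = C' *v ((((*v) A')^^N) (B' *v b))" by (rule hN[OF Suc])
    show ?case
      using eventually_conj[OF Suc eventually_conj[OF eventually_gt_at_top[of "mK A"] eventually_gt_at_top[of "mK A'"]]]
      by (rule eventually_mono) (simp add: rec rec' h)
  qed
  then show "C *v ((((*v) A)^^N) (B *v b)) = C' *v ((((*v) A')^^N) (B' *v b))" by (rule hN)
qed

lemma cv_inj: "(\<chi> i. complex_of_real (x $ i)) = (\<chi> i. complex_of_real (y $ i)) \<Longrightarrow> x = y"
  by (simp add: vec_eq_iff)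

lemma markov_real:
  fixes AK :: "real^'k^'k" and BK :: "real^'n^'k" and CK :: "real^'k^'m" and DK :: "real^'n^'m"
    and AK' :: "real^'l^'l" and BK' :: "real^'n^'l" and CK' :: "real^'l^'m" and DK' :: "real^'n^'m"
  assumes st: "same_tf AK BK CK DK AK' BK' CK' DK'"
  shows "DK = DK'"
    "CK *v ((((*v) AK)^^N) (BK *v b)) = CK' *v ((((*v) AK')^^N) (BK' *v b))"
proof -
  let ?cv = "\<lambda>x::real^'n. (\<chi> i. complex_of_real (x $ i))"
  have ev: "\<forall>\<^sub>F t in at_top. cmat CK *v (Rs (cmat AK) t *v (cmat BK *v ?cv b)) + cmat DK *v ?cv b
      = cmat CK' *v (Rs (cmat AK') t *v (cmat BK' *v ?cv b)) + cmat DK' *v ?cv b" for b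
    using eventually_conj[OF eventually_gt_at_top[of "mK (cmat AK)"] eventually_gt_at_top[of "mK (cmat AK')"]]
  proof (rule eventually_mono)
    fix t assume t: "mK (cmat AK) < t \<and> mK (cmat AK') < t"
    have "tf AK BK CK DK (complex_of_real t) = tf AK' BK' CK' DK' (complex_of_real t)"
      using st Rs_props(3)[of "cmat AK" t] Rs_props(3)[of "cmat AK'" t] t unfolding same_tf_def by blast
    then have "tf AK BK CK DK (complex_of_real t) *v ?cv b = tf AK' BK' CK' DK' (complex_of_real t) *v ?cv b"
      by simp
    then show "cmat CK *v (Rs (cmat AK) t *v (cmat BK *v ?cv b)) + cmat DK *v ?cv b
      = cmat CK' *v (Rs (cmat AK') t *v (cmat BK' *v ?cv b)) + cmat DK' *v ?cv b"
      unfolding tf_def Rs_def by (simp add: matrix_vector_mult_add_rdistrib matrix_vector_mul_assoc matrix_mul_assoc)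
  qed
  have "DK *v b = DK' *v b" for b
    using markov_eq(1)[OF ev[of b]] unfolding cmat_mult_cv by (rule cv_inj)
  then show "DK = DK'" by (simp add: matrix_eq)
  show "CK *v ((((*v) AK)^^N) (BK *v b)) = CK' *v ((((*v) AK')^^N) (BK' *v b))"
    using markov_eq(2)[OF ev[of b], of N] unfolding cmat_mult_cv cmat_pow_cv by (rule cv_inj)
qed


lemma mv_sum: "(M::real^'n^'m) *v sum f I = (\<Sum>i\<in>I. M *v f i)"
  by (induction I rule: infinite_finite_induct) (simp_all add: matrix_vector_right_distrib)

lemma conv_Suc:
  fixes M :: "real^'a^'a"
  shows "(\<Sum>i<Suc j. (((*v) M)^^(Suc j - 1 - i)) (f i)) = M *v (\<Sum>i<j. (((*v) M)^^(j - 1 - i)) (f i)) + f j"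
proof -
  have "M *v (\<Sum>i<j. (((*v) M)^^(j - 1 - i)) (f i)) = (\<Sum>i<j. (((*v) M)^^(Suc j - 1 - i)) (f i))"
    unfolding mv_sum
  proof (rule sum.cong)
    fix i assume "i \<in> {..<j}"
    then have "Suc j - 1 - i = Suc (j - 1 - i)" by auto
    then show "M *v (((*v) M)^^(j - 1 - i)) (f i) = (((*v) M)^^(Suc j - 1 - i)) (f i)"
      by simp
  qed simp
  then show ?thesis by simp
qed

lemma projx_stack[simp]: "projx (stack x z) = x" by (simp add: projx_def stack_def)
lemma projk_stack[simp]: "projk (stack x z) = z" by (simp add: projk_def stack_def)
lemma stack_add: "stack a b + stack c d = stack (a + c) (b + d)"
  by (simp add: vec_eq_iff stack_def split: sum.split)
lemma projx_add: "projx (a + b) = projx a + projx b" by (simp add: projx_def vec_eq_iff)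
lemma projx_zero[simp]: "projx 0 = 0" by (simp add: projx_def vec_eq_iff)
lemma projx_sum: "projx (sum f I) = (\<Sum>i\<in>I. projx (f i))"
  by (induction I rule: infinite_finite_induct) (simp_all add: projx_add)

lemma ACL_stack:
  "ACL A B AK BK CK DK *v stack x z = stack ((A + B ** DK) *v x + (B ** CK) *v z) (BK *v x + AK *v z)"
  by (simp add: vec_eq_iff ACL_def stack_def matrix_vector_mult_def sum.Plus
       UNIV_Plus_UNIV[symmetric] split: sum.split del: UNIV_Plus_UNIV)

lemma norm_stack0: "norm (stack x (0::real^'k::finite)) \<le> real CARD('n + 'k) * norm (x::real^'n::finite)"
proof -
  have "norm (stack x (0::real^'k)) \<le> (\<Sum>r\<in>UNIV. \<bar>stack x (0::real^'k) $ r\<bar>)" by (rule norm_le_l1_cart)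
  also have "\<dots> \<le> (\<Sum>r\<in>(UNIV::('n+'k) set). norm x)"
  proof (rule sum_mono)
    fix r :: "'n + 'k"
    show "\<bar>stack x (0::real^'k) $ r\<bar> \<le> norm x"
      by (cases r) (simp_all add: stack_def component_le_norm_cart)
  qed
  finally show ?thesis by simp
qed

lemma norm_projx: "norm (projx (z::real^('n::finite+'k::finite))) \<le> real CARD('n) * norm z"
proof -
  have "norm (projx z) \<le> (\<Sum>i\<in>UNIV. \<bar>projx z $ i\<bar>)" by (rule norm_le_l1_cart)
  also have "\<dots> \<le> (\<Sum>i\<in>(UNIV::'n set). norm z)"
    by (rule sum_mono) (simp add: projx_def component_le_norm_cart)
  finally show ?thesis by simp
qed

lemma msums_mem: "(\<And>i. i \<le> M \<Longrightarrow> g i \<in> F i) \<Longrightarrow> (\<Sum>i<Suc M. g i) \<in> msums F M"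
proof (induction M)
  case 0
  then show ?case by simp
next
  case (Suc M)
  have "(\<Sum>i<Suc M. g i) \<in> msums F M" using Suc by auto
  moreover have "g (Suc M) \<in> F (Suc M)" using Suc by auto
  ultimately show ?case by (auto simp: msum_def)
qed

lemma convex_pdiff: "convex C \<Longrightarrow> convex (C \<ominus>\<^sub>P B)" for C :: "'a::real_vector set"
  unfolding convex_def pdiff_def
proof (clarsimp)
  fix x y b :: 'a and u v :: real
  assume c: "\<forall>x\<in>C. \<forall>y\<in>C. \<forall>u\<ge>0. \<forall>v\<ge>0. u + v = 1 \<longrightarrow> u *\<^sub>R x + v *\<^sub>R y \<in> C"
    and x: "\<forall>b\<in>B. x + b \<in> C" and y: "\<forall>b\<in>B. y + b \<in> C" and uv: "0 \<le> u" "0 \<le> v" "u + v = 1" and b: "b \<in> B"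
  have "u *\<^sub>R (x + b) + v *\<^sub>R (y + b) \<in> C" using c x y uv b by blast
  moreover have "u *\<^sub>R (x + b) + v *\<^sub>R (y + b) = u *\<^sub>R x + v *\<^sub>R y + b"
    using uv by (simp add: algebra_simps flip: scaleR_add_left)
  ultimately show "u *\<^sub>R x + v *\<^sub>R y + b \<in> C" by simp
qed

lemma bounded_msum: "bounded P \<Longrightarrow> bounded Q \<Longrightarrow> bounded (P \<oplus>\<^sub>M Q)" for P :: "'a::real_normed_vector set"
proof -
  assume "bounded P" "bounded Q"
  then obtain a b where a: "\<forall>x\<in>P. norm x \<le> a" and b: "\<forall>x\<in>Q. norm x \<le> b"
    unfolding bounded_iff by blast
  have "\<forall>x\<in>P \<oplus>\<^sub>M Q. norm x \<le> a + b"
    using a b by (auto simp: msum_def intro!: order_trans[OF norm_triangle_ineq] add_mono)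
  then show ?thesis unfolding bounded_iff by blast
qed

lemma traj:
  fixes A :: "real^'n^'n" and B :: "real^'m^'n"
    and D W V S X :: "(real^'n) set" and U :: "(real^'m) set"
    and AK :: "real^'k^'k" and BK :: "real^'n^'k" and CK :: "real^'k^'m" and DK :: "real^'n^'m"
    and OmI :: "(real^'n) set" and OmO :: "(real^('n + 'k)) set"
    and AK' :: "real^'l^'l" and BK' :: "real^'n^'l" and CK' :: "real^'l^'m" and DK' :: "real^'n^'m"
    and xh :: "nat \<Rightarrow> real^'l"
  assumes U0: "0 \<in> U"
    and SX: "S \<subseteq> X"
    and OmIS: "OmI \<subseteq> S"
    and Pconv: "convex (OmI \<ominus>\<^sub>P (uminus ` V \<oplus>\<^sub>M V))"
    and alpha: "0 < \<alpha>" "cball 0 \<alpha> \<subseteq> OmI \<ominus>\<^sub>P (uminus ` V \<oplus>\<^sub>M V)"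
    and beta: "0 < \<beta>" "\<beta> < 1"
      "\<forall>N. msums (\<lambda>i. projx ` ((\<lambda>z. ((*v) (ACL A B AK BK CK DK) ^^ i) (BCL B BK DK z)) ` (W \<times> V))) N
                     \<subseteq> (*\<^sub>R) \<beta> ` (OmI \<ominus>\<^sub>P (uminus ` V \<oplus>\<^sub>M V))"
    and O1: "\<forall>x\<in>convex hull (S \<union> (((*v) A ` S) \<oplus>\<^sub>M W \<oplus>\<^sub>M D)). stack x 0 \<in> OmO"
    and O2: "((*v) (ACL A B AK BK CK DK) ` OmO) \<oplus>\<^sub>M (BCL B BK DK ` (W \<times> V)) \<subseteq> OmO"
    and O3: "projx ` OmO \<subseteq> X"
    and O4: "(CCL CK DK ` OmO) \<oplus>\<^sub>M (DCL DK ` (W \<times> V)) \<subseteq> U"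
    and DKeq: "DK' = DK"
    and mk: "\<And>N b. CK' *v ((((*v) AK') ^^ N) (BK' *v b)) = CK *v ((((*v) AK) ^^ N) (BK *v b))"
    and N: "0 < N"
    and decay: "\<forall>x0\<in>convex hull (S \<union> (((*v) A ` S) \<oplus>\<^sub>M W \<oplus>\<^sub>M D)).
                  norm (projx ((((*v) (ACL A B AK BK CK DK)) ^^ N) (stack x0 0))) \<le> \<alpha> * (1 - \<beta>)"
    and x0: "x k0 \<in> convex hull (S \<union> (((*v) A ` S) \<oplus>\<^sub>M W \<oplus>\<^sub>M D))"
    and pl: "plant A B D W V k0 x y sg u d w v"
    and alg: "algorithm1 S V OmI AK' BK' CK' DK' k0 y sg u xh"
  shows "(\<forall>k\<ge>k0. x k \<in> X \<and> u k \<in> U) \<and> (\<forall>k\<ge>k0. sg k = 0 \<longrightarrow> x k \<in> S) \<and>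
         (sg k0 = 1 \<longrightarrow> (\<exists>T0\<in>{1..N}. sg (k0 + T0) = 0)) \<and>
         (\<forall>k>k0. sg k = 1 \<and> sg (k - 1) = 0 \<longrightarrow> (\<exists>T\<in>{1..N}. sg (k + T) = 0))"
proof -
  define M where "M = ACL A B AK BK CK DK"
  define BC where "BC = BCL B BK DK"
  define Sc where "Sc = convex hull (S \<union> (((*v) A ` S) \<oplus>\<^sub>M W \<oplus>\<^sub>M D))"
  define SV where "SV = S \<ominus>\<^sub>P (uminus ` V)"
  define OV where "OV = OmI \<ominus>\<^sub>P (uminus ` V)"
  define P where "P = OmI \<ominus>\<^sub>P (uminus ` V \<oplus>\<^sub>M V)"
  note defs = M_def[symmetric] BC_def[symmetric] Sc_def[symmetric] SV_def[symmetric] OV_def[symmetric] P_def[symmetric]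
  have pl': "d k \<in> D \<and> w k \<in> W \<and> v k \<in> V \<and> y k = x k + v k \<and>
        x (Suc k) = A *v x k + real (sg k) *\<^sub>R (B *v u k) + (1 - real (sg k)) *\<^sub>R d k + w k" if "k0 \<le> k" for k
    using pl that unfolding plant_def by blast
  have a0: "y k0 \<in> SV \<Longrightarrow> sg k0 = 0 \<and> u k0 = 0" using alg unfolding algorithm1_def SV_def by blast
  have a0': "y k0 \<notin> SV \<Longrightarrow> sg k0 = 1 \<and> xh k0 = 0" using alg unfolding algorithm1_def SV_def by blast
  have ak: "(if y k \<in> SV then (if sg (k - 1) = 1 \<and> y k \<notin> OV then sg k = 1 else sg k = 0 \<and> u k = 0)
            else (sg (k - 1) = 0 \<longrightarrow> xh k = 0) \<and> sg k = 1)" if "k0 < k" for k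
    using alg that unfolding algorithm1_def SV_def OV_def by blast
  have ac: "u k = CK' *v xh k + DK' *v y k \<and> xh (Suc k) = AK' *v xh k + BK' *v y k"
    if "k0 \<le> k" "sg k = 1" for k
    using alg that unfolding algorithm1_def by blast
  have sg01: "sg k = 0 \<or> sg k = 1" if "k0 \<le> k" for k
  proof (cases "k = k0")
    case True then show ?thesis using a0 a0' by (cases "y k0 \<in> SV") auto
  next
    case False then have "k0 < k" using that by simp
    then show ?thesis using ak[of k] by (auto split: if_splits)
  qed
  have sg0y: "y k \<in> SV" if "k0 \<le> k" "sg k = 0" for k
  proof (cases "k = k0")
    case True then show ?thesis using a0' that by fastforce
  next
    case False then have "k0 < k" using that by simp
    then show ?thesis using ak[of k] that by (auto split: if_splits)
  qed
  have sg0u: "u k = 0" if "k0 \<le> k" "sg k = 0" for k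
  proof (cases "k = k0")
    case True then show ?thesis using a0 sg0y that by blast
  next
    case False then have "k0 < k" using that by simp
    then show ?thesis using ak[of k] that sg0y[OF that] by (auto split: if_splits)
  qed
  have sg0x: "x k \<in> S" if "k0 \<le> k" "sg k = 0" for k
  proof -
    have "y k \<in> SV" using sg0y[OF that] .
    moreover have "- v k \<in> uminus ` V" using pl'[OF that(1)] by blast
    ultimately have "y k + - v k \<in> S" unfolding SV_def pdiff_def by blast
    then show ?thesis using pl'[OF that(1)] by simp
  qed
  have OVSV: "OV \<subseteq> SV" using OmIS unfolding OV_def SV_def pdiff_def by blast
  have exitc: "sg k = 0" if "k0 < k" "y k \<in> OV" for k
    using ak[OF that(1)] that(2) OVSV by (auto split: if_splits)
  have start0: "xh k0 = 0" if "sg k0 = 1"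
    using a0 a0' that by (cases "y k0 \<in> SV") auto
  have startk: "xh k = 0 \<and> x k \<in> Sc" if st: "k0 < k" "sg k = 1" "sg (k - 1) = 0" for k
  proof -
    have "y k \<notin> SV"
    proof
      assume "y k \<in> SV"
      then show False using ak[OF st(1)] st(2,3) by (auto split: if_splits)
    qed
    then have xh0: "xh k = 0" using ak[OF st(1)] st(3) by simp
    obtain k' where k': "k = Suc k'" "k0 \<le> k'" using st(1) by (cases k) auto
    have sk': "sg k' = 0" using st(3) k' by simp
    have xk': "x k' \<in> S" using sg0x[OF k'(2) sk'] .
    have "x k = A *v x k' + w k' + d k'" using pl'[OF k'(2)] sk' k'(1) by simp
    moreover have "A *v x k' + w k' + d k' \<in> ((*v) A ` S) \<oplus>\<^sub>M W \<oplus>\<^sub>M D"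
      using xk' pl'[OF k'(2)] unfolding msum_def by blast
    ultimately have "x k \<in> Sc" unfolding Sc_def by (simp add: hull_inc)
    then show ?thesis using xh0 by simp
  qed
  have mvsum: "CK' *v (\<Sum>i<j. (((*v) AK')^^(j-1-i)) (BK' *v y (s+i))) = CK *v (\<Sum>i<j. (((*v) AK)^^(j-1-i)) (BK *v y (s+i)))"
    for s j by (simp add: mv_sum mk)
  have ep: "xh (s+j) = (\<Sum>i<j. (((*v) AK')^^(j-1-i)) (BK' *v y (s+i))) \<and>
     stack (x (s+j)) (\<Sum>i<j. (((*v) AK)^^(j-1-i)) (BK *v y (s+i))) =
        (((*v) M)^^j) (stack (x s) 0) + (\<Sum>i<j. (((*v) M)^^(j-1-i)) (BC (w (s+i), v (s+i)))) \<and>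
     stack (x (s+j)) (\<Sum>i<j. (((*v) AK)^^(j-1-i)) (BK *v y (s+i))) \<in> OmO"
    if s: "k0 \<le> s" "xh s = 0" "x s \<in> Sc" and allj: "\<forall>i<j. sg (s+i) = 1" for s j
    using allj
  proof (induction j)
    case 0
    then show ?case using s O1 unfolding Sc_def by simp
  next
    case (Suc j)
    have IH: "xh (s+j) = (\<Sum>i<j. (((*v) AK')^^(j-1-i)) (BK' *v y (s+i)))"
      "stack (x (s+j)) (\<Sum>i<j. (((*v) AK)^^(j-1-i)) (BK *v y (s+i))) =
        (((*v) M)^^j) (stack (x s) 0) + (\<Sum>i<j. (((*v) M)^^(j-1-i)) (BC (w (s+i), v (s+i))))"
      "stack (x (s+j)) (\<Sum>i<j. (((*v) AK)^^(j-1-i)) (BK *v y (s+i))) \<in> OmO"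
      using Suc by auto
    define xK where "xK = (\<Sum>i<j. (((*v) AK)^^(j-1-i)) (BK *v y (s+i)))"
    define xKp where "xKp = (\<Sum>i<j. (((*v) AK')^^(j-1-i)) (BK' *v y (s+i)))"
    have sj: "sg (s+j) = 1" using Suc.prems by simp
    have kj: "k0 \<le> s + j" using s by simp
    have acj: "u (s+j) = CK' *v xh (s+j) + DK' *v y (s+j)" "xh (Suc (s+j)) = AK' *v xh (s+j) + BK' *v y (s+j)"
      using ac[OF kj sj] by auto
    have uj: "u (s+j) = CK *v xK + DK *v y (s+j)"
      using acj(1) IH(1) mvsum[of j s] DKeq unfolding xK_def by simp
    have plj: "w (s+j) \<in> W" "v (s+j) \<in> V" "y (s+j) = x (s+j) + v (s+j)"
       "x (Suc (s+j)) = A *v x (s+j) + B *v u (s+j) + w (s+j)"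
      using pl'[OF kj] sj by auto
    have xhS: "xh (s + Suc j) = (\<Sum>i<Suc j. (((*v) AK')^^(Suc j-1-i)) (BK' *v y (s+i)))"
      unfolding conv_Suc using acj(2) IH(1) by simp
    have xKS: "(\<Sum>i<Suc j. (((*v) AK)^^(Suc j-1-i)) (BK *v y (s+i))) = AK *v xK + BK *v y (s+j)"
      unfolding conv_Suc xK_def by simp
    have rec: "stack (x (s + Suc j)) (AK *v xK + BK *v y (s+j)) = M *v stack (x (s+j)) xK + BC (w (s+j), v (s+j))"
      unfolding M_def BC_def ACL_stack BCL_def stack_add
      using plj(3,4) uj
      by (simp add: matrix_vector_mult_add_rdistrib matrix_vector_right_distrib
          matrix_vector_mul_assoc[symmetric] algebra_simps)
    have cf: "M *v stack (x (s+j)) xK + BC (w (s+j), v (s+j)) =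
       (((*v) M)^^Suc j) (stack (x s) 0) + (\<Sum>i<Suc j. (((*v) M)^^(Suc j-1-i)) (BC (w (s+i), v (s+i))))"
      unfolding conv_Suc IH(2)[folded xK_def] powv_Suc by (simp add: matrix_vector_right_distrib algebra_simps)
    have mem: "M *v stack (x (s+j)) xK + BC (w (s+j), v (s+j)) \<in> OmO"
      using O2 IH(3)[folded xK_def] plj(1,2) unfolding M_def[symmetric] BC_def[symmetric] msum_def by blast
    have e1: "stack (x (s + Suc j)) (\<Sum>i<Suc j. (((*v) AK)^^(Suc j-1-i)) (BK *v y (s+i))) = M *v stack (x (s+j)) xK + BC (w (s+j), v (s+j))"
      unfolding xKS by (rule rec)
    show ?case
    proof (intro conjI)
      show "xh (s + Suc j) = (\<Sum>i<Suc j. (((*v) AK')^^(Suc j-1-i)) (BK' *v y (s+i)))" by (rule xhS)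
      show "stack (x (s + Suc j)) (\<Sum>i<Suc j. (((*v) AK)^^(Suc j-1-i)) (BK *v y (s+i))) =
        (((*v) M)^^Suc j) (stack (x s) 0) + (\<Sum>i<Suc j. (((*v) M)^^(Suc j-1-i)) (BC (w (s+i), v (s+i))))"
        unfolding e1 by (rule cf)
      show "stack (x (s + Suc j)) (\<Sum>i<Suc j. (((*v) AK)^^(Suc j-1-i)) (BK *v y (s+i))) \<in> OmO"
        unfolding e1 by (rule mem)
    qed
  qed
  have ucalc: "u (s+j) = CCL CK DK (stack (x (s+j)) (\<Sum>i<j. (((*v) AK)^^(j-1-i)) (BK *v y (s+i)))) + DCL DK (w (s+j), v (s+j))"
    if kj: "k0 \<le> s + j" and sj: "sg (s+j) = 1" and xhf: "xh (s+j) = (\<Sum>i<j. (((*v) AK')^^(j-1-i)) (BK' *v y (s+i)))" for s j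
  proof -
    have "u (s+j) = CK' *v xh (s+j) + DK' *v y (s+j)" using ac[OF kj sj] by auto
    also have "\<dots> = CK *v (\<Sum>i<j. (((*v) AK)^^(j-1-i)) (BK *v y (s+i))) + DK *v (x (s+j) + v (s+j))"
      using xhf mvsum[of j s] DKeq pl'[OF kj] by simp
    finally show ?thesis by (simp add: CCL_def DCL_def matrix_vector_right_distrib algebra_simps)
  qed
  have find_start: "\<exists>s. k0 \<le> s \<and> s \<le> k \<and> (\<forall>i. s \<le> i \<and> i \<le> k \<longrightarrow> sg i = 1) \<and> (s = k0 \<or> sg (s - 1) = 0)"
    if "k0 \<le> k" "sg k = 1" for k
    using that
  proof (induction k)
    case 0
    then show ?case by (intro exI[of _ 0]) auto
  next
    case (Suc k)
    show ?case
    proof (cases "Suc k = k0")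
      case True
      then show ?thesis using Suc.prems by (intro exI[of _ k0]) (auto simp: le_antisym)
    next
      case False
      then have kk: "k0 \<le> k" using Suc.prems by simp
      show ?thesis
      proof (cases "sg k = 1")
        case True
        then obtain s where "k0 \<le> s \<and> s \<le> k \<and> (\<forall>i. s \<le> i \<and> i \<le> k \<longrightarrow> sg i = 1) \<and> (s = k0 \<or> sg (s - 1) = 0)"
          using Suc.IH kk by blast
        then show ?thesis using Suc.prems by (intro exI[of _ s]) (auto simp: le_Suc_eq)
      next
        case False
        then have "sg k = 0" using sg01[OF kk] by simp
        then show ?thesis using Suc.prems by (intro exI[of _ "Suc k"]) auto
      qed
    qed
  qed
  have good_start: "xh s = 0 \<and> x s \<in> Sc" if "k0 \<le> s" "sg s = 1" "s = k0 \<or> sg (s - 1) = 0" for s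
  proof (cases "s = k0")
    case True then show ?thesis using start0 that x0 unfolding Sc_def by simp
  next
    case False then show ?thesis using startk[of s] that by simp
  qed
  have partA: "x k \<in> X \<and> u k \<in> U" if k: "k0 \<le> k" for k
  proof (cases "sg k = 0")
    case True then show ?thesis using sg0x[OF k True] sg0u[OF k True] SX U0 by auto
  next
    case False
    then have sk: "sg k = 1" using sg01[OF k] by simp
    obtain s where s: "k0 \<le> s" "s \<le> k" "\<forall>i. s \<le> i \<and> i \<le> k \<longrightarrow> sg i = 1" "s = k0 \<or> sg (s - 1) = 0"
      using find_start[OF k sk] by blast
    have gs: "xh s = 0" "x s \<in> Sc" using good_start[OF s(1) _ s(4)] s(2,3) by auto
    define j where "j = k - s"
    have kj: "k = s + j" using s(2) by (simp add: j_def)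
    have allj: "\<forall>i<j. sg (s+i) = 1" using s(3) kj by auto
    note E = ep[OF s(1) gs allj]
    have "projx (stack (x (s+j)) (\<Sum>i<j. (((*v) AK)^^(j-1-i)) (BK *v y (s+i)))) \<in> X"
      using E O3 by blast
    then have "x k \<in> X" using kj by simp
    moreover have "u k \<in> U"
    proof -
      have "u (s+j) = CCL CK DK (stack (x (s+j)) (\<Sum>i<j. (((*v) AK)^^(j-1-i)) (BK *v y (s+i)))) + DCL DK (w (s+j), v (s+j))"
        by (rule ucalc) (use s E kj sk in auto)
      moreover have "w (s+j) \<in> W" "v (s+j) \<in> V" using pl' s(1) by auto
      ultimately show ?thesis using O4 E kj unfolding msum_def by blast
    qed
    ultimately show ?thesis ..
  qed
  have key: "\<exists>T\<in>{1..N}. sg (s + T) = 0" if s: "k0 \<le> s" "sg s = 1" "xh s = 0" "x s \<in> Sc" for s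
  proof (rule ccontr)
    assume nT: "\<not> (\<exists>T\<in>{1..N}. sg (s + T) = 0)"
    have allN: "\<forall>i<N. sg (s+i) = 1"
    proof (intro allI impI)
      fix i assume "i < N"
      show "sg (s+i) = 1"
      proof (cases "i = 0")
        case True then show ?thesis using s by simp
      next
        case False
        then have "i \<in> {1..N}" using \<open>i < N\<close> by auto
        then have "sg (s+i) \<noteq> 0" using nT by (metis)
        then show ?thesis using sg01[of "s+i"] s(1) by auto
      qed
    qed
    note E = ep[OF s(1) s(3) s(4) allN]
    define a where "a = projx ((((*v) M)^^N) (stack (x s) 0))"
    define g where "g i = projx ((((*v) M)^^i) (BC (w (s + (N - 1 - i)), v (s + (N - 1 - i)))))" for i
    have xN: "x (s+N) = a + (\<Sum>i<N. g i)"
    proof -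
      have "x (s+N) = projx ((((*v) M)^^N) (stack (x s) 0)) + (\<Sum>i<N. projx ((((*v) M)^^(N-1-i)) (BC (w (s+i), v (s+i)))))"
        using arg_cong[OF conjunct1[OF conjunct2[OF E]], of projx] by (simp add: projx_add projx_sum)
      also have "(\<Sum>i<N. projx ((((*v) M)^^(N-1-i)) (BC (w (s+i), v (s+i))))) = (\<Sum>i<N. g (N - Suc i))"
        by (rule sum.cong) (auto simp: g_def)
      also have "\<dots> = (\<Sum>i<N. g i)" by (rule sum.nat_diff_reindex)
      finally show ?thesis unfolding a_def .
    qed
    have NS: "Suc (N - 1) = N" using N by simp
    have "(\<Sum>i<Suc (N-1). g i) \<in> msums (\<lambda>i. projx ` ((\<lambda>z. ((*v) M ^^ i) (BC z)) ` (W \<times> V))) (N - 1)"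
    proof (rule msums_mem)
      fix i assume "i \<le> N - 1"
      have "(w (s + (N - 1 - i)), v (s + (N - 1 - i))) \<in> W \<times> V" using pl' s(1) by auto
      then show "g i \<in> projx ` ((\<lambda>z. ((*v) M ^^ i) (BC z)) ` (W \<times> V))" unfolding g_def by blast
    qed
    then obtain p where p: "p \<in> P" "(\<Sum>i<N. g i) = \<beta> *\<^sub>R p"
      using beta(3) NS unfolding M_def[symmetric] BC_def[symmetric] P_def[symmetric] by force
    have na: "norm a \<le> \<alpha> * (1 - \<beta>)" using decay s(4) unfolding a_def M_def Sc_def by blast
    have "(1 / (1 - \<beta>)) *\<^sub>R a \<in> cball 0 \<alpha>"
      using na beta by (simp add: field_simps)
    then have ap: "(1 / (1 - \<beta>)) *\<^sub>R a \<in> P" using alpha unfolding P_def by blast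
    have "(1 - \<beta>) *\<^sub>R ((1 / (1 - \<beta>)) *\<^sub>R a) + \<beta> *\<^sub>R p \<in> P"
      by (rule convexD[OF Pconv[folded P_def] ap p(1)]) (use beta in auto)
    moreover have "(1 - \<beta>) *\<^sub>R ((1 / (1 - \<beta>)) *\<^sub>R a) = a" using beta by simp
    ultimately have xP: "x (s+N) \<in> P" using xN p(2) by simp
    have kN: "k0 \<le> s + N" using s by simp
    have "y (s+N) \<in> OV"
      unfolding OV_def pdiff_def
    proof (rule CollectI, rule ballI)
      fix b assume "b \<in> uminus ` V"
      then have "b + v (s+N) \<in> uminus ` V \<oplus>\<^sub>M V" using pl'[OF kN] unfolding msum_def by blast
      then have "x (s+N) + (b + v (s+N)) \<in> OmI" using xP unfolding P_def pdiff_def by blast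
      then show "y (s+N) + b \<in> OmI" using pl'[OF kN] by (simp add: algebra_simps)
    qed
    then have "sg (s+N) = 0" using exitc[of "s+N"] s(1) N by simp
    moreover have "N \<in> {1..N}" using N by simp
    ultimately show False using nT by blast
  qed
  show ?thesis
  proof (intro conjI allI impI)
    show "x k \<in> X" "u k \<in> U" if "k0 \<le> k" for k using partA[OF that] by auto
    show "x k \<in> S" if "k0 \<le> k" "sg k = 0" for k using sg0x[OF that] .
    show "\<exists>T0\<in>{1..N}. sg (k0 + T0) = 0" if "sg k0 = 1"
      using key[of k0] that start0 x0 unfolding Sc_def by simp
    show "\<exists>T\<in>{1..N}. sg (k + T) = 0" if "k0 < k" "sg k = 1 \<and> sg (k - 1) = 0" for k
      using key[of k] that startk[of k] by simp
  qed
qed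

theorem corollary1:
  fixes A :: "real^'n^'n" and B :: "real^'m^'n"
    and D W V S X :: "(real^'n) set" and U :: "(real^'m) set"
    and \<epsilon>p \<epsilon>m \<epsilon>s :: real
    and AK :: "real^'k^'k" and BK :: "real^'n^'k" and CK :: "real^'k^'m" and DK :: "real^'n^'m"
    and OmI :: "(real^'n) set" and OmO :: "(real^('n + 'k)) set"
    and AK' :: "real^'l^'l" and BK' :: "real^'n^'l" and CK' :: "real^'l^'m" and DK' :: "real^'n^'m"
  assumes polyD: "polytope D" "0 \<in> interior D"
    and polyW: "polytope W" "0 \<in> interior W"
    and polyV: "polytope V" "0 \<in> interior V"
    and polyS: "polytope S" "0 \<in> interior S"
    and polyX: "polytope X" "0 \<in> interior X"
    and polyU: "polytope U" "0 \<in> interior U"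
    and SX: "S \<subseteq> X"
    and eps: "0 < \<epsilon>p" "\<epsilon>p < 1" "0 < \<epsilon>m" "\<epsilon>m < 1"
    and Vp: "V \<subseteq> (*\<^sub>R) \<epsilon>p ` S"
    and Vm: "uminus ` V \<subseteq> (*\<^sub>R) \<epsilon>m ` S"
    and ballS: "\<exists>r>0. cball 0 r \<subseteq> S"
    and Splus: "((*v) A ` S) \<oplus>\<^sub>M W \<oplus>\<^sub>M D \<subseteq> X"
    and schurACL: "schur (ACL A B AK BK CK DK)"
    and polyOI: "polyhedron OmI" "0 \<in> OmI"
    and polyOO: "polyhedron OmO" "0 \<in> OmO"
    and epss: "0 < \<epsilon>s" "\<epsilon>s < 1"
    and I1: "OmI \<subseteq> (*\<^sub>R) \<epsilon>s ` S"
    and I2: "\<exists>\<alpha>>0. cball 0 \<alpha> \<subseteq> OmI \<ominus>\<^sub>P (uminus ` V \<oplus>\<^sub>M V)"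
    and I3: "\<exists>\<beta>. 0 < \<beta> \<and> \<beta> < 1 \<and>
              (\<forall>N. msums (\<lambda>i. projx ` ((\<lambda>z. ((*v) (ACL A B AK BK CK DK) ^^ i) (BCL B BK DK z)) ` (W \<times> V))) N
                     \<subseteq> (*\<^sub>R) \<beta> ` (OmI \<ominus>\<^sub>P (uminus ` V \<oplus>\<^sub>M V)))"
    and O1: "\<forall>x\<in>convex hull (S \<union> (((*v) A ` S) \<oplus>\<^sub>M W \<oplus>\<^sub>M D)). stack x 0 \<in> OmO"
    and O2: "((*v) (ACL A B AK BK CK DK) ` OmO) \<oplus>\<^sub>M (BCL B BK DK ` (W \<times> V)) \<subseteq> OmO"
    and O3: "projx ` OmO \<subseteq> X"
    and O4: "(CCL CK DK ` OmO) \<oplus>\<^sub>M (DCL DK ` (W \<times> V)) \<subseteq> U"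
    and realiz: "same_tf AK BK CK DK AK' BK' CK' DK'"
  shows
    "(\<forall>k0 x y sg u xh d w v.
        x k0 \<in> convex hull (S \<union> (((*v) A ` S) \<oplus>\<^sub>M W \<oplus>\<^sub>M D)) \<and>
        plant A B D W V k0 x y sg u d w v \<and>
        algorithm1 S V OmI AK' BK' CK' DK' k0 y sg u (xh :: nat \<Rightarrow> real^'l) \<longrightarrow>
          (\<forall>k\<ge>k0. x k \<in> X \<and> u k \<in> U) \<and>
          (\<forall>k\<ge>k0. sg k = 0 \<longrightarrow> x k \<in> S)) \<and>
     (\<exists>Tmax::nat. Tmax > 0 \<and>
       (\<forall>k0 x y sg u xh d w v.
          x k0 \<in> convex hull (S \<union> (((*v) A ` S) \<oplus>\<^sub>M W \<oplus>\<^sub>M D)) \<and>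
          plant A B D W V k0 x y sg u d w v \<and>
          algorithm1 S V OmI AK' BK' CK' DK' k0 y sg u (xh :: nat \<Rightarrow> real^'l) \<longrightarrow>
            (sg k0 = 1 \<longrightarrow> (\<exists>T0\<in>{1..Tmax}. sg (k0 + T0) = 0)) \<and>
            (\<forall>k>k0. sg k = 1 \<and> sg (k - 1) = 0 \<longrightarrow> (\<exists>T\<in>{1..Tmax}. sg (k + T) = 0))))"
proof -
  have U0: "0 \<in> U" using polyU(2) interior_subset by blast
  have convS: "convex S" using polyS(1) polytope_imp_convex by blast
  have S0: "0 \<in> S" using polyS(2) interior_subset by blast
  have OmIS: "OmI \<subseteq> S"
  proof
    fix z assume "z \<in> OmI"
    then obtain q where q: "q \<in> S" "z = \<epsilon>s *\<^sub>R q" using I1 by blast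
    have "\<epsilon>s *\<^sub>R q + (1 - \<epsilon>s) *\<^sub>R 0 \<in> S" by (rule convexD[OF convS q(1) S0]) (use epss in auto)
    then show "z \<in> S" using q by simp
  qed
  have Pconv: "convex (OmI \<ominus>\<^sub>P (uminus ` V \<oplus>\<^sub>M V))"
    using convex_pdiff polyhedron_imp_convex[OF polyOI(1)] by blast
  obtain \<alpha> where alpha: "0 < \<alpha>" "cball 0 \<alpha> \<subseteq> OmI \<ominus>\<^sub>P (uminus ` V \<oplus>\<^sub>M V)" using I2 by blast
  obtain \<beta> where beta: "0 < \<beta>" "\<beta> < 1"
      "\<forall>N. msums (\<lambda>i. projx ` ((\<lambda>z. ((*v) (ACL A B AK BK CK DK) ^^ i) (BCL B BK DK z)) ` (W \<times> V))) N
                     \<subseteq> (*\<^sub>R) \<beta> ` (OmI \<ominus>\<^sub>P (uminus ` V \<oplus>\<^sub>M V))" using I3 by blast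
  have DKeq: "DK' = DK" using markov_real(1)[OF realiz] by simp
  have mk: "CK' *v ((((*v) AK') ^^ N) (BK' *v b)) = CK *v ((((*v) AK) ^^ N) (BK *v b))" for N b
    using markov_real(2)[OF realiz, of N b] by simp
  obtain c r where cr: "0 < r" "r < 1" "0 \<le> c"
      "\<And>k x. norm ((((*v) (ACL A B AK BK CK DK)) ^^ k) x) \<le> c * r^k * norm x"
    using schur_decay[OF schurACL] by blast
  have bSc: "bounded (convex hull (S \<union> (((*v) A ` S) \<oplus>\<^sub>M W \<oplus>\<^sub>M D)))"
  proof -
    have bS: "bounded S" using polyS(1) polytope_imp_bounded by blast
    have "bounded ((*v) A ` S)" using bounded_linear_image[OF bS matrix_vector_mul_bounded_linear] .
    moreover have "bounded W" "bounded D" using polyW(1) polyD(1) polytope_imp_bounded by blast+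
    ultimately have "bounded (((*v) A ` S) \<oplus>\<^sub>M W \<oplus>\<^sub>M D)" by (intro bounded_msum)
    then show ?thesis using bS by (intro bounded_convex_hull) (simp add: bounded_Un)
  qed
  obtain R where R: "\<forall>x\<in>convex hull (S \<union> (((*v) A ` S) \<oplus>\<^sub>M W \<oplus>\<^sub>M D)). norm x \<le> R"
    using bSc unfolding bounded_iff by blast
  define K0 where "K0 = c * real CARD('n) * real CARD('n + 'k) * \<bar>R\<bar>"
  have K0: "0 \<le> K0" using cr(3) by (simp add: K0_def)
  have pos: "0 < \<alpha> * (1 - \<beta>) / (K0 + 1)" using alpha(1) beta K0 by simp
  obtain n where n: "r ^ n < \<alpha> * (1 - \<beta>) / (K0 + 1)" using real_arch_pow_inv[OF pos cr(2)] by blast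
  define N where "N = Suc n"
  have N: "0 < N" by (simp add: N_def)
  have decay: "\<forall>x0\<in>convex hull (S \<union> (((*v) A ` S) \<oplus>\<^sub>M W \<oplus>\<^sub>M D)).
                  norm (projx ((((*v) (ACL A B AK BK CK DK)) ^^ N) (stack x0 0))) \<le> \<alpha> * (1 - \<beta>)"
  proof
    fix x0 assume x0: "x0 \<in> convex hull (S \<union> (((*v) A ` S) \<oplus>\<^sub>M W \<oplus>\<^sub>M D))"
    define \<xi> where "\<xi> = (((*v) (ACL A B AK BK CK DK)) ^^ N) (stack x0 (0::real^'k))"
    have a1: "norm (projx \<xi>) \<le> real CARD('n) * norm \<xi>" by (rule norm_projx)
    have a2: "norm \<xi> \<le> c * r^N * norm (stack x0 (0::real^'k))" unfolding \<xi>_def by (rule cr(4))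
    have a3: "norm (stack x0 (0::real^'k)) \<le> real CARD('n + 'k) * \<bar>R\<bar>"
    proof -
      have "norm x0 \<le> \<bar>R\<bar>" using R x0 by force
      then show ?thesis using norm_stack0[of x0] by (smt (verit) mult_left_mono of_nat_0_le_iff)
    qed
    have a4: "r^N \<le> r^n" unfolding N_def using cr(1,2) by (simp add: power_decreasing)
    have "norm \<xi> \<le> c * r^N * (real CARD('n + 'k) * \<bar>R\<bar>)"
      using a2 a3 cr(1,3) by (smt (verit) mult_left_mono zero_le_power zero_le_mult_iff)
    then have "norm (projx \<xi>) \<le> K0 * r^N"
      using a1 by (smt (verit) K0_def mult.assoc mult.commute mult_left_mono of_nat_0_le_iff)
    also have "\<dots> \<le> K0 * r^n" using a4 K0 by (rule mult_left_mono)
    also have "\<dots> \<le> (K0 + 1) * r^n" using cr(1) by (simp add: distrib_right)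
    also have "\<dots> < \<alpha> * (1 - \<beta>)" using n K0 by (simp add: pos_less_divide_eq mult.commute)
    finally show "norm (projx \<xi>) \<le> \<alpha> * (1 - \<beta>)" by simp
  qed
  note T = traj[OF U0 SX OmIS Pconv alpha beta O1 O2 O3 O4 DKeq mk N decay]
  show ?thesis
  proof (intro conjI)
    show "\<forall>k0 x y sg u xh d w v.
        x k0 \<in> convex hull (S \<union> (((*v) A ` S) \<oplus>\<^sub>M W \<oplus>\<^sub>M D)) \<and>
        plant A B D W V k0 x y sg u d w v \<and>
        algorithm1 S V OmI AK' BK' CK' DK' k0 y sg u (xh :: nat \<Rightarrow> real^'l) \<longrightarrow>
          (\<forall>k\<ge>k0. x k \<in> X \<and> u k \<in> U) \<and>
          (\<forall>k\<ge>k0. sg k = 0 \<longrightarrow> x k \<in> S)"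
      by ((rule allI)+, rule impI, elim conjE, frule (2) T, blast)
    show "\<exists>Tmax::nat. Tmax > 0 \<and>
       (\<forall>k0 x y sg u xh d w v.
          x k0 \<in> convex hull (S \<union> (((*v) A ` S) \<oplus>\<^sub>M W \<oplus>\<^sub>M D)) \<and>
          plant A B D W V k0 x y sg u d w v \<and>
          algorithm1 S V OmI AK' BK' CK' DK' k0 y sg u (xh :: nat \<Rightarrow> real^'l) \<longrightarrow>
            (sg k0 = 1 \<longrightarrow> (\<exists>T0\<in>{1..Tmax}. sg (k0 + T0) = 0)) \<and>
            (\<forall>k>k0. sg k = 1 \<and> sg (k - 1) = 0 \<longrightarrow> (\<exists>T\<in>{1..Tmax}. sg (k + T) = 0)))"
      by (rule exI[of _ N], rule conjI[OF N], (rule allI)+, rule impI, elim conjE, frule (2) T, blast)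
  qed
qed


end
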